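(* Let $X$ be a Tychonoff space and let $cX$, $dX$ be compactifications of $X$ with $dX\preceq cX$, witnessed by a continuous map $\varphi: cX\to dX$. Suppose $X$ is an $F_{\sigma\delta}$ subset of $cX$ and that the family $\mathcal F(cX,dX)$ is at most countable. Then $X$ is an $F_{\sigma\delta}$ subset of $dX$.
   Context: A compactification of $X$ is a pair $(cX,\varphi_c)$ with $cX$ compact Hausdorff and $\varphi_c$ a homeomorphic embedding of $X$ onto a dense subspace of $cX$; we identify $X$ with its image in $cX$ (and in $dX$). We write $dX\preceq cX$ if there exists a continuous map $\varphi:cX\to dX$ with $\varphi_d=\varphi\circ\varphi_c$. For such $\varphi$, $\mathcal F(cX,dX):=\{\varphi^{-1}(x) : x\in dX,\ \varphi^{-1}(x)\text{ is not a singleton}\}$. An $F_{\sigma\delta}$ set is a countable intersection of countable unions of closed sets. *)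

theory Defs
  imports "HOL-Analysis.Analysis"
begin

definition fsigmadelta_in :: "'a topology \<Rightarrow> 'a set \<Rightarrow> bool" where
  "fsigmadelta_in X \<equiv> (countable intersection_of fsigma_in X) relative_to topspace X"

text \<open>Tychonoff = completely regular + Hausdorff (T1 would be equivalent).\<close>
definition Tychonoff_space :: "'a topology \<Rightarrow> bool" where
  "Tychonoff_space X \<longleftrightarrow> completely_regular_space X \<and> Hausdorff_space X"

definition compactification :: "'a topology \<Rightarrow> 'b topology \<Rightarrow> ('a \<Rightarrow> 'b) \<Rightarrow> bool" where
  "compactification X K e \<longleftrightarrow> compact_space K \<and> Hausdorff_space K \<and>
     embedding_map X K e \<and> K closure_of (e ` topspace X) = topspace K"

definition nontrivial_fibres :: "'b topology \<Rightarrow> 'c topology \<Rightarrow> ('b \<Rightarrow> 'c) \<Rightarrow> 'b set set" where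
  "nontrivial_fibres cX dX \<phi> =
     {{z \<in> topspace cX. \<phi> z = y} | y. y \<in> topspace dX \<and>
        \<not> (\<exists>a. {z \<in> topspace cX. \<phi> z = y} = {a})}"

end

theory Submission
  imports Defs
begin

lemma key_lemma:
  fixes G :: "nat \<Rightarrow> nat \<Rightarrow> 'b set"
  assumes K: "compact_space K" and G: "\<And>n m. closedin K (G n m)"
    and C: "closedin K C" and dis: "C \<inter> (\<Inter>n. \<Union>m. G n m) = {}"
  shows "\<exists>\<S>. countable \<S> \<and> (\<forall>S\<in>\<S>. closedin K S \<and> S \<inter> C = {}) \<and> (\<Inter>n. \<Union>m. G n m) \<subseteq> \<Union>\<S>"
proof -
  define F where "F s = topspace K \<inter> (\<Inter>i<length s. G i (s!i))" for s :: "nat list"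
  have Fcl: "closedin K (F s)" for s
  proof (cases "length s = 0")
    case True then show ?thesis by (simp add: F_def)
  next
    case False
    have "F s = (\<Inter>i<length s. G i (s!i))"
      using False closedin_subset[OF G] unfolding F_def by fastforce
    then show ?thesis using False G by (auto intro!: closedin_Inter)
  qed
  define \<S> where "\<S> = F ` {s. F s \<inter> C = {}}"
  have "countable \<S>" unfolding \<S>_def
    by (rule countable_image, rule countable_subset[OF subset_UNIV countableI_type])
  moreover have "\<forall>S\<in>\<S>. closedin K S \<and> S \<inter> C = {}" using Fcl \<S>_def by auto
  moreover have "(\<Inter>n. \<Union>m. G n m) \<subseteq> \<Union>\<S>"
  proof
    fix y assume y: "y \<in> (\<Inter>n. \<Union>m. G n m)"
    then have "\<forall>n. \<exists>m. y \<in> G n m" by blast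
    then have "\<exists>\<sigma>. \<forall>n. y \<in> G n (\<sigma> n)" by (rule choice)
    then obtain \<sigma> where \<sigma>: "\<And>n. y \<in> G n (\<sigma> n)" by blast
    define H where "H n = topspace K \<inter> (\<Inter>i<n. G i (\<sigma> i))" for n
    have HF: "H n = F (map \<sigma> [0..<n])" for n
      unfolding H_def F_def by simp
    have Hmono: "m \<le> n \<Longrightarrow> H n \<subseteq> H m" for m n unfolding H_def by auto
    have "\<exists>n. H n \<inter> C = {}"
    proof (rule ccontr)
      assume "\<not> ?thesis"
      then have ne: "H n \<inter> C \<noteq> {}" for n by blast
      have "compactin K (topspace K)" using K compact_space_def by blast
      moreover have "\<forall>D\<in>range (\<lambda>n. C \<inter> H n). closedin K D"
        using C Fcl HF by auto
      moreover have "\<forall>\<F>. finite \<F> \<and> \<F> \<subseteq> range (\<lambda>n. C \<inter> H n) \<longrightarrow> topspace K \<inter> \<Inter>\<F> \<noteq> {}"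
      proof (intro allI impI)
        fix \<F> assume f: "finite \<F> \<and> \<F> \<subseteq> range (\<lambda>n. C \<inter> H n)"
        then obtain I where I: "finite I" "\<F> = (\<lambda>n. C \<inter> H n) ` I"
          by (meson finite_subset_image)
        then obtain N where N: "I \<subseteq> {..<N}" using finite_nat_bounded by blast
        have "C \<inter> H N \<subseteq> topspace K \<inter> \<Inter>\<F>"
          using I N Hmono H_def by fastforce
        then show "topspace K \<inter> \<Inter>\<F> \<noteq> {}" using ne[of N] by blast
      qed
      ultimately have "topspace K \<inter> \<Inter>(range (\<lambda>n. C \<inter> H n)) \<noteq> {}"
        unfolding compactin_fip by blast
      then obtain p where p: "p \<in> C" "\<And>n. p \<in> H n" by blast
      have "p \<in> G n (\<sigma> n)" for n using p(2)[of "Suc n"] unfolding H_def by auto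
      then have "p \<in> (\<Inter>n. \<Union>m. G n m)" by blast
      then show False using p(1) dis by blast
    qed
    then obtain n where n: "H n \<inter> C = {}" by blast
    have "y \<in> topspace K" using \<sigma>[of 0] closedin_subset[OF G] by blast
    then have "y \<in> H n" using \<sigma> unfolding H_def by auto
    then show "y \<in> \<Union>\<S>" using n HF unfolding \<S>_def by auto
  qed
  ultimately show ?thesis by blast
qed


theorem corollary3p4:
  fixes X :: "'a topology" and cX :: "'b topology" and dX :: "'c topology"
    and ec :: "'a \<Rightarrow> 'b" and ed :: "'a \<Rightarrow> 'c" and \<phi> :: "'b \<Rightarrow> 'c"
  assumes "Tychonoff_space X"
    and "compactification X cX ec"
    and "compactification X dX ed"
    and "continuous_map cX dX \<phi>"
    and "\<And>x. x \<in> topspace X \<Longrightarrow> \<phi> (ec x) = ed x"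
    and "fsigmadelta_in cX (ec ` topspace X)"
    and "countable (nontrivial_fibres cX dX \<phi>)"
  shows "fsigmadelta_in dX (ed ` topspace X)"
proof -
  have cpt: "compact_space cX" and emb: "embedding_map X cX ec"
    using assms(2) unfolding compactification_def by auto
  have Hd: "Hausdorff_space dX" using assms(3) unfolding compactification_def by auto
  define Y where "Y = ec ` topspace X"
  define Z where "Z = ed ` topspace X"
  have Ysub: "Y \<subseteq> topspace cX"
  proof -
    have "continuous_map X (subtopology cX (ec ` topspace X)) ec"
      using emb unfolding embedding_map_def by (rule homeomorphic_imp_continuous_map)
    then have "continuous_map X cX ec" by (simp add: continuous_map_in_subtopology)
    then show ?thesis unfolding Y_def by (rule continuous_map_image_subset_topspace)
  qed
  have ZY: "Z = \<phi> ` Y" unfolding Z_def Y_def image_image by (rule image_cong) (simp_all add: assms(5))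
  have climg: "closedin dX (\<phi> ` S)" if "closedin cX S" for S
    by (rule compactin_imp_closedin[OF Hd image_compactin[OF closedin_compact_space[OF cpt that] assms(4)]])
  obtain U where U: "countable U" "\<And>u. u \<in> U \<Longrightarrow> fsigma_in cX u" "Y = topspace cX \<inter> \<Inter>U"
    using assms(6) unfolding fsigmadelta_in_def relative_to_def intersection_of_def Y_def by auto
  define U' where "U' = insert (topspace cX) U"
  have "countable U'" "U' \<noteq> {}" using U unfolding U'_def by auto
  then have rg: "range (from_nat_into U') = U'" by (simp add: range_from_nat_into)
  define g where "g = from_nat_into U'"
  have gf: "fsigma_in cX (g n)" for n
  proof -
    have "g n \<in> U'" using rg unfolding g_def by blast
    then show ?thesis using U(2) unfolding U'_def by auto
  qed
  have "\<forall>n::nat. \<exists>C::nat \<Rightarrow> 'b set. (\<forall>m. closedin cX (C m)) \<and> \<Union>(range C) = g n"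
  proof
    fix n :: nat
    show "\<exists>C::nat \<Rightarrow> 'b set. (\<forall>m. closedin cX (C m)) \<and> \<Union>(range C) = g n"
      using gf[of n] unfolding fsigma_in_ascending by blast
  qed
  then have "\<exists>G::nat \<Rightarrow> nat \<Rightarrow> 'b set. \<forall>n. (\<forall>m. closedin cX (G n m)) \<and> \<Union>(range (G n)) = g n"
    by (rule choice)
  then obtain G :: "nat \<Rightarrow> nat \<Rightarrow> 'b set" where G: "\<And>n m. closedin cX (G n m)" "\<And>n. \<Union>(range (G n)) = g n" by blast
  have YG: "Y = (\<Inter>n. \<Union>m. G n m)"
  proof -
    have "Y = \<Inter>U'" using U(3) unfolding U'_def by auto
    also have "\<dots> = (\<Inter>n. g n)" using rg g_def by simp
    finally show ?thesis using G(2) by simp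
  qed
  define Q where "Q = {P \<in> nontrivial_fibres cX dX \<phi>. P \<inter> Y = {}}"
  have "countable Q" using assms(7) unfolding Q_def by (rule countable_subset[rotated]) auto
  have "\<exists>\<S>. countable \<S> \<and> (\<forall>S\<in>\<S>. closedin cX S \<and> S \<inter> P = {}) \<and> Y \<subseteq> \<Union>\<S>" if PQ: "P \<in> Q" for P
  proof -
    obtain y where y: "y \<in> topspace dX" "P = {z \<in> topspace cX. \<phi> z = y}"
      using PQ unfolding Q_def nontrivial_fibres_def by blast
    have "closedin dX {y}" using Hd y(1) by (meson Hausdorff_imp_t1_space t1_space_closedin_singleton)
    then have "closedin cX {z \<in> topspace cX. \<phi> z \<in> {y}}"
      by (rule closedin_continuous_map_preimage[OF assms(4)])
    then have Pc: "closedin cX P" using y(2) by simp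
    have "P \<inter> (\<Inter>n. \<Union>m. G n m) = {}" using PQ YG unfolding Q_def by auto
    from key_lemma[of cX G P, OF cpt G(1) Pc this] show ?thesis using YG by auto
  qed
  then have "\<forall>P\<in>Q. \<exists>\<S>. countable \<S> \<and> (\<forall>S\<in>\<S>. closedin cX S \<and> S \<inter> P = {}) \<and> Y \<subseteq> \<Union>\<S>" by blast
  then have "\<exists>SS. \<forall>P\<in>Q. countable (SS P) \<and> (\<forall>S\<in>SS P. closedin cX S \<and> S \<inter> P = {}) \<and> Y \<subseteq> \<Union>(SS P)"
    by (rule bchoice)
  then obtain SS where SS0: "\<forall>P\<in>Q. countable (SS P) \<and> (\<forall>S\<in>SS P. closedin cX S \<and> S \<inter> P = {}) \<and> Y \<subseteq> \<Union>(SS P)"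
    by (rule exE)
  have SS: "countable (SS P) \<and> (\<forall>S\<in>SS P. closedin cX S \<and> S \<inter> P = {}) \<and> Y \<subseteq> \<Union>(SS P)" if "P \<in> Q" for P
    by (rule bspec[OF SS0 that])
  define W where "W = range (\<lambda>n. \<Union>m. \<phi> ` G n m) \<union> (\<lambda>P. \<Union>((image \<phi>) ` SS P)) ` Q"
  have "countable W" unfolding W_def using \<open>countable Q\<close> by auto
  have Wf: "fsigma_in dX w" if "w \<in> W" for w
  proof -
    { fix n
      have "fsigma_in dX (\<Union>(range (\<lambda>m. \<phi> ` G n m)))"
        by (rule fsigma_in_Union) (auto intro: closed_imp_fsigma_in climg G(1)) }
    moreover
    { fix P assume "P \<in> Q"
      have "fsigma_in dX (\<Union>((image \<phi>) ` SS P))"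
        by (rule fsigma_in_Union) (use SS[OF \<open>P \<in> Q\<close>] in \<open>auto intro: closed_imp_fsigma_in climg\<close>) }
    ultimately show ?thesis using that unfolding W_def by auto
  qed
  have eq: "Z = topspace dX \<inter> \<Inter>W"
  proof
    show "Z \<subseteq> topspace dX \<inter> \<Inter>W"
    proof
      fix w assume "w \<in> Z"
      then obtain y where y: "y \<in> Y" "w = \<phi> y" using ZY by auto
      have "w \<in> topspace dX" using y Ysub continuous_map_image_subset_topspace[OF assms(4)] by blast
      moreover have "w \<in> (\<Union>m. \<phi> ` G n m)" for n using y YG by blast
      moreover have "w \<in> \<Union>((image \<phi>) ` SS P)" if "P \<in> Q" for P using y SS[OF that] by blast
      ultimately show "w \<in> topspace dX \<inter> \<Inter>W" unfolding W_def by auto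
    qed
  next
    show "topspace dX \<inter> \<Inter>W \<subseteq> Z"
    proof
      fix w assume w: "w \<in> topspace dX \<inter> \<Inter>W"
      show "w \<in> Z"
      proof (rule ccontr)
        assume wZ: "w \<notin> Z"
        define P where "P = {z \<in> topspace cX. \<phi> z = w}"
        have PY: "P \<inter> Y = {}" using wZ ZY unfolding P_def by blast
        show False
        proof (cases "\<exists>a. P = {a}")
          case True
          then obtain a where a: "P = {a}" by blast
          have "a \<in> (\<Union>m. G n m)" for n
          proof -
            have "(\<Union>m. \<phi> ` G n m) \<in> W" unfolding W_def by blast
            then have "w \<in> (\<Union>m. \<phi> ` G n m)" using w by blast
            then obtain m g where "g \<in> G n m" "\<phi> g = w" by auto
            moreover have "g \<in> topspace cX" using \<open>g \<in> G n m\<close> closedin_subset[OF G(1)] by blast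
            ultimately have "g \<in> P" unfolding P_def by auto
            then show ?thesis using a \<open>g \<in> G n m\<close> by auto
          qed
          then have "a \<in> Y" using YG by blast
          then show False using PY a by auto
        next
          case False
          have "P \<in> nontrivial_fibres cX dX \<phi>"
            unfolding nontrivial_fibres_def P_def
            by (intro CollectI exI[of _ w] conjI refl) (use w False[unfolded P_def] in auto)
          then have "P \<in> Q" using PY unfolding Q_def by simp
          then have "\<Union>((image \<phi>) ` SS P) \<in> W" unfolding W_def by blast
          then have "w \<in> \<Union>((image \<phi>) ` SS P)" using w by blast
          then obtain S s where "S \<in> SS P" "s \<in> S" "\<phi> s = w" by auto
          moreover have "closedin cX S" "S \<inter> P = {}" using SS[OF \<open>P \<in> Q\<close>] \<open>S \<in> SS P\<close> by auto
          ultimately have "s \<in> topspace cX" "s \<notin> P" using closedin_subset[of cX S] by blast+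
          then show False using \<open>\<phi> s = w\<close> unfolding P_def by blast
        qed
      qed
    qed
  qed
  have "(countable intersection_of fsigma_in dX) (\<Inter>W)"
    unfolding intersection_of_def using \<open>countable W\<close> Wf by blast
  then show ?thesis unfolding fsigmadelta_in_def relative_to_def Z_def[symmetric] using eq by blast
qed

end
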